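(* Let $A$ be a $\boldsymbol{\mathit{ba}\ell}$-algebra and $I$ an $\ell$-ideal of $A$. Then the archimedean hull of $I$ is $$[\![I]\!]=\{x\in A\mid (n|x|-1)^+\in I \text{ for all integers } n\ge 1\}.$$
   Context: A $\boldsymbol{\mathit{ba}\ell}$-algebra is a commutative unital lattice-ordered algebra $A$ over $\mathbb R$ that is bounded (for every $a\in A$ there is an integer $n\ge1$ with $a\le n\cdot1$) and archimedean (if $na\le b$ for all $n\ge1$ then $a\le0$); a real $r$ is identified with $r\cdot 1$. For $a\in A$: $a^+=a\vee0$, $a^-=(-a)\vee0$, $|a|=a\vee(-a)$. An $\ell$-ideal is a ring ideal $I$ such that $|a|\le|b|$ and $b\in I$ imply $a\in I$; it is archimedean if $A/I$ is archimedean. For $S\subseteq A$, the archimedean hull $[\![S]\!]$ is the intersection of all archimedean $\ell$-ideals of $A$ containing $S$. *)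

theory Defs
  imports Complex_Main "HOL-Library.Lattice_Algebras"
begin

class bal_algebra = comm_ring_1 + lattice_ring + real_algebra_1 + ordered_real_vector +
  assumes bounded: "\<exists>n::nat. n \<ge> 1 \<and> a \<le> of_nat n"
  assumes archimedean: "(\<And>n::nat. n \<ge> 1 \<Longrightarrow> of_nat n * a \<le> b) \<Longrightarrow> a \<le> 0"

definition pos_part :: "'a::lattice_ring \<Rightarrow> 'a" where
  "pos_part a = sup a 0"

definition ring_ideal :: "'a::comm_ring_1 set \<Rightarrow> bool" where
  "ring_ideal I \<longleftrightarrow> 0 \<in> I \<and> (\<forall>x\<in>I. \<forall>y\<in>I. x + y \<in> I) \<and> (\<forall>x\<in>I. - x \<in> I)
     \<and> (\<forall>a x. x \<in> I \<longrightarrow> a * x \<in> I)"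

definition l_ideal :: "'a::bal_algebra set \<Rightarrow> bool" where
  "l_ideal I \<longleftrightarrow> ring_ideal I \<and> (\<forall>a b. \<bar>a\<bar> \<le> \<bar>b\<bar> \<and> b \<in> I \<longrightarrow> a \<in> I)"

text \<open>Order on the quotient A/I, induced from the quotient lattice:
  [a] \<le> [b] iff inf [a] [b] = [a] iff (inf a b) - a \<in> I.\<close>
definition quot_le :: "'a::bal_algebra set \<Rightarrow> 'a \<Rightarrow> 'a \<Rightarrow> bool" where
  "quot_le I a b \<longleftrightarrow> inf a b - a \<in> I"

text \<open>I is archimedean iff A/I is archimedean (stated in terms of representatives).\<close>
definition archimedean_l_ideal :: "'a::bal_algebra set \<Rightarrow> bool" where
  "archimedean_l_ideal I \<longleftrightarrow> l_ideal I \<and>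
     (\<forall>a b. (\<forall>n::nat. n \<ge> 1 \<longrightarrow> quot_le I (of_nat n * a) b) \<longrightarrow> quot_le I a 0)"

definition arch_hull :: "'a::bal_algebra set \<Rightarrow> 'a set" where
  "arch_hull S = \<Inter> {I. archimedean_l_ideal I \<and> S \<subseteq> I}"

end

theory Submission imports Defs begin

lemma ofnat_mult: "(of_nat n :: 'a::bal_algebra) * x = real n *\<^sub>R x"
  by (metis of_real_of_nat_eq scaleR_conv_of_real)

lemma pos_part_pprt: "pos_part a = pprt a"
  by (simp add: pos_part_def pprt_def)

lemma one_nonneg: "(0::'a::bal_algebra) \<le> 1"
proof -
  define p :: 'a where "p = sup 1 0"
  define q :: 'a where "q = sup (-1) 0"
  have q0: "0 \<le> q" by (simp add: q_def)
  have pq: "1 + q = p" unfolding p_def q_def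
    by (simp add: add_sup_distrib_left sup_commute)
  obtain n::nat where n: "n \<ge> 1" "q \<le> of_nat n" using bounded by blast
  have pq1: "p - q = 1" using pq by (metis add_diff_cancel_right')
  have on: "(of_nat n::'a) = real n *\<^sub>R (p - q)" using ofnat_mult[of n "1::'a"] pq1
    by simp
  have "q \<le> real n *\<^sub>R (p - q)" using n(2) on by simp
  hence "q + real n *\<^sub>R q \<le> real n *\<^sub>R p" by (simp add: scaleR_right_diff_distrib le_diff_eq)
  hence "real n *\<^sub>R q \<le> real n *\<^sub>R p" using q0 by (meson add_increasing order_refl order_trans)
  hence "(1 / real n) *\<^sub>R (real n *\<^sub>R q) \<le> (1 / real n) *\<^sub>R (real n *\<^sub>R p)"
    by (rule scaleR_left_mono) simp
  moreover have e1: "(1 / real n) *\<^sub>R (real n *\<^sub>R q) = q" and e2: "(1 / real n) *\<^sub>R (real n *\<^sub>R p) = p"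
    using n(1) by auto
  ultimately have "q \<le> p" by (simp only: e1 e2)
  hence "0 \<le> p - q" by simp
  thus ?thesis using pq1 by simp
qed

lemma pprt_scale:
  fixes a :: "'a::bal_algebra"
  assumes r: "0 \<le> r"
  shows "pprt (r *\<^sub>R a) = r *\<^sub>R pprt a"
proof (cases "r = 0")
  case True thus ?thesis by simp
next
  case False
  hence rp: "r > 0" using r by simp
  have "pprt (r *\<^sub>R a) \<le> r *\<^sub>R pprt a"
    unfolding pprt_def
  proof (rule sup_least)
    show "r *\<^sub>R a \<le> r *\<^sub>R sup a 0" using r by (simp add: scaleR_left_mono)
    show "0 \<le> r *\<^sub>R sup a 0" using r by (simp add: scaleR_nonneg_nonneg)
  qed
  moreover have "sup a 0 \<le> (1/r) *\<^sub>R sup (r *\<^sub>R a) 0"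
  proof (rule sup_least)
    have "(1/r) *\<^sub>R (r *\<^sub>R a) \<le> (1/r) *\<^sub>R sup (r *\<^sub>R a) 0"
      using rp by (intro scaleR_left_mono) auto
    moreover have "(1/r) *\<^sub>R (r *\<^sub>R a) = a" using rp by simp
    ultimately show "a \<le> (1/r) *\<^sub>R sup (r *\<^sub>R a) 0" by metis
    show "0 \<le> (1/r) *\<^sub>R sup (r *\<^sub>R a) 0" using rp by (simp add: scaleR_nonneg_nonneg)
  qed
  hence "r *\<^sub>R pprt a \<le> r *\<^sub>R ((1/r) *\<^sub>R sup (r *\<^sub>R a) 0)"
    unfolding pprt_def using r by (intro scaleR_left_mono)
  hence "r *\<^sub>R pprt a \<le> pprt (r *\<^sub>R a)" using rp by (simp add: pprt_def)
  ultimately show ?thesis by (rule antisym)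
qed

lemma solid_nonneg:
  fixes a :: "'a::bal_algebra"
  assumes "l_ideal I" "0 \<le> a" "a \<le> b" "b \<in> I"
  shows "a \<in> I"
proof -
  have "\<bar>a\<bar> \<le> \<bar>b\<bar>" using assms(2,3) by simp
  thus ?thesis using assms unfolding l_ideal_def by blast
qed

lemma quot_le_iff:
  fixes a :: "'a::bal_algebra"
  assumes "ring_ideal I"
  shows "quot_le I a b \<longleftrightarrow> pprt (a - b) \<in> I"
proof -
  have "inf a b - a = inf (a - a) (b - a)"
    using add_inf_distrib_right[of a b "-a"] by simp
  also have "\<dots> = - pprt (a - b)"
    by (simp add: pprt_def neg_sup_eq_inf inf_commute)
  finally have e: "inf a b - a = - pprt (a - b)" .
  show ?thesis unfolding quot_le_def e using assms unfolding ring_ideal_def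
    by (metis minus_minus)
qed


lemma half_two: "(1/2::real) *\<^sub>R (2::'a::real_algebra_1) = 1"
proof -
  have "(1/2::real) *\<^sub>R (2::'a) = of_real (1/2) * of_real 2" by (simp add: scaleR_conv_of_real)
  also have "\<dots> = of_real ((1/2) * 2)" by (simp only: of_real_mult)
  finally show ?thesis by simp
qed

definition JJ :: "'a::bal_algebra set \<Rightarrow> 'a set" where
  "JJ I = {x. \<forall>n::nat. n \<ge> 1 \<longrightarrow> pprt (real n *\<^sub>R \<bar>x\<bar> - 1) \<in> I}"

lemma l_ideal_ring: "l_ideal I \<Longrightarrow> ring_ideal I"
  by (simp add: l_ideal_def)

lemma JJ_mono:
  fixes x y :: "'a::bal_algebra"
  assumes I: "l_ideal I" and x: "x \<in> JJ I" and le: "\<bar>y\<bar> \<le> real m *\<^sub>R \<bar>x\<bar>" and m: "m \<ge> 1"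
  shows "y \<in> JJ I"
  unfolding JJ_def
proof (intro CollectI allI impI)
  fix n :: nat assume n: "n \<ge> 1"
  have nm: "n * m \<ge> 1" using n m by simp
  have "real n *\<^sub>R \<bar>y\<bar> \<le> real n *\<^sub>R (real m *\<^sub>R \<bar>x\<bar>)"
    using le by (intro scaleR_left_mono) auto
  also have "\<dots> = real (n * m) *\<^sub>R \<bar>x\<bar>" by simp
  finally have "pprt (real n *\<^sub>R \<bar>y\<bar> - 1) \<le> pprt (real (n * m) *\<^sub>R \<bar>x\<bar> - 1)"
    by (intro pprt_mono) (simp add: diff_right_mono)
  moreover have "pprt (real (n * m) *\<^sub>R \<bar>x\<bar> - 1) \<in> I" using x nm unfolding JJ_def by blast
  ultimately show "pprt (real n *\<^sub>R \<bar>y\<bar> - 1) \<in> I"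
    using solid_nonneg[OF I] zero_le_pprt by blast
qed

lemma JJ_solid:
  fixes x y :: "'a::bal_algebra"
  assumes I: "l_ideal I" and x: "x \<in> JJ I" and le: "\<bar>y\<bar> \<le> \<bar>x\<bar>"
  shows "y \<in> JJ I"
  using JJ_mono[OF I x, of y 1] le by simp

lemma JJ_add:
  fixes x y :: "'a::bal_algebra"
  assumes I: "l_ideal I" and x: "x \<in> JJ I" and y: "y \<in> JJ I"
  shows "x + y \<in> JJ I"
  unfolding JJ_def
proof (intro CollectI allI impI)
  fix n :: nat assume n: "n \<ge> 1"
  define S where "S = pprt (real (2*n) *\<^sub>R \<bar>x\<bar> - 1) + pprt (real (2*n) *\<^sub>R \<bar>y\<bar> - 1)"
  have n2: "2*n \<ge> 1" using n by simp
  have s1: "pprt (real (2*n) *\<^sub>R \<bar>x\<bar> - 1) \<in> I" using x n2 unfolding JJ_def by blast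
  have s2: "pprt (real (2*n) *\<^sub>R \<bar>y\<bar> - 1) \<in> I" using y n2 unfolding JJ_def by blast
  have S: "S \<in> I" using s1 s2 I unfolding S_def l_ideal_def ring_ideal_def by blast
  have S0: "0 \<le> S" unfolding S_def by (simp add: add_nonneg_nonneg)
  have "real n *\<^sub>R \<bar>x + y\<bar> \<le> real n *\<^sub>R (\<bar>x\<bar> + \<bar>y\<bar>)"
    by (intro scaleR_left_mono) (auto simp: abs_triangle_ineq)
  also have "\<dots> - 1 = (1/2) *\<^sub>R (real (2*n) *\<^sub>R \<bar>x\<bar> - 1) + (1/2) *\<^sub>R (real (2*n) *\<^sub>R \<bar>y\<bar> - 1)"
    by (simp add: algebra_simps scaleR_add_right scaleR_diff_right half_two)
  also have "\<dots> \<le> (1/2) *\<^sub>R pprt (real (2*n) *\<^sub>R \<bar>x\<bar> - 1) + (1/2) *\<^sub>R pprt (real (2*n) *\<^sub>R \<bar>y\<bar> - 1)"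
    by (intro add_mono scaleR_left_mono) (auto simp: pprt_def)
  also have "\<dots> = (1/2) *\<^sub>R S" by (simp add: S_def scaleR_add_right)
  also have "\<dots> \<le> S"
  proof -
    have "(1/2) *\<^sub>R S \<le> (1::real) *\<^sub>R S" using S0 by (intro scaleR_right_mono) auto
    thus ?thesis by simp
  qed
  finally have "real n *\<^sub>R \<bar>x + y\<bar> - 1 \<le> S" by (simp add: diff_right_mono)
  hence "pprt (real n *\<^sub>R \<bar>x + y\<bar> - 1) \<le> S" using S0 by (simp add: pprt_def)
  thus "pprt (real n *\<^sub>R \<bar>x + y\<bar> - 1) \<in> I"
    using solid_nonneg[OF I] zero_le_pprt S by blast
qed

lemma I_sub_JJ:
  fixes x :: "'a::bal_algebra"
  assumes I: "l_ideal I" and x: "x \<in> I"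
  shows "x \<in> JJ I"
  unfolding JJ_def
proof (intro CollectI allI impI)
  fix n :: nat assume n: "n \<ge> 1"
  have "\<bar>\<bar>x\<bar>\<bar> \<le> \<bar>x\<bar>" by simp
  hence ax: "\<bar>x\<bar> \<in> I" using I x unfolding l_ideal_def by blast
  have "(of_nat n :: 'a) * \<bar>x\<bar> \<in> I" using I ax unfolding l_ideal_def ring_ideal_def by blast
  hence nx: "real n *\<^sub>R \<bar>x\<bar> \<in> I" by (simp add: ofnat_mult)
  have "pprt (real n *\<^sub>R \<bar>x\<bar> - 1) \<le> real n *\<^sub>R \<bar>x\<bar>"
    unfolding pprt_def using one_nonneg by (auto intro!: sup_least scaleR_nonneg_nonneg)
  thus "pprt (real n *\<^sub>R \<bar>x\<bar> - 1) \<in> I"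
    using solid_nonneg[OF I] zero_le_pprt nx by blast
qed

lemma JJ_ring_ideal:
  fixes I :: "'a::bal_algebra set"
  assumes I: "l_ideal I"
  shows "ring_ideal (JJ I)"
  unfolding ring_ideal_def
proof (intro conjI ballI allI impI)
  show "0 \<in> JJ I" using I_sub_JJ[OF I] I unfolding l_ideal_def ring_ideal_def by blast
  fix x assume x: "x \<in> JJ I"
  show "- x \<in> JJ I" using JJ_solid[OF I x] by simp
  fix y assume "y \<in> JJ I"
  thus "x + y \<in> JJ I" using JJ_add[OF I x] by blast
next
  fix a x :: 'a assume x: "x \<in> JJ I"
  obtain m :: nat where m: "m \<ge> 1" "\<bar>a\<bar> \<le> of_nat m" using bounded by blast
  have "\<bar>a * x\<bar> \<le> \<bar>a\<bar> * \<bar>x\<bar>" by (rule abs_le_mult)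
  also have "\<dots> \<le> of_nat m * \<bar>x\<bar>" using m(2) by (intro mult_right_mono) auto
  finally show "a * x \<in> JJ I" using JJ_mono[OF I x _ m(1)] by (simp add: ofnat_mult)
qed

lemma JJ_l_ideal:
  fixes I :: "'a::bal_algebra set"
  assumes I: "l_ideal I"
  shows "l_ideal (JJ I)"
  unfolding l_ideal_def using JJ_ring_ideal[OF I] JJ_solid[OF I] by blast


lemma sup_diff: "sup x y - (M::'a::bal_algebra) = sup (x - M) (y - M)"
  using add_sup_distrib_right[of x y "-M"] by simp

lemma pprt_le_nonneg: "(x::'a::bal_algebra) \<le> z \<Longrightarrow> 0 \<le> z \<Longrightarrow> pprt x \<le> z"
  by (simp add: pprt_def)

lemma JJ_arch:
  fixes I :: "'a::bal_algebra set"
  assumes I: "l_ideal I"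
  shows "archimedean_l_ideal (JJ I)"
  unfolding archimedean_l_ideal_def
proof (intro conjI allI impI)
  show "l_ideal (JJ I)" by (rule JJ_l_ideal[OF I])
  have RJ: "ring_ideal (JJ I)" by (rule JJ_ring_ideal[OF I])
  fix a b :: 'a
  assume H: "\<forall>n::nat. n \<ge> 1 \<longrightarrow> quot_le (JJ I) (of_nat n * a) b"
  define c where "c = pprt a"
  have c0: "0 \<le> c" by (simp add: c_def)
  obtain m :: nat where m: "m \<ge> 1" "b \<le> of_nat m" using bounded by blast
  define M :: 'a where "M = real m *\<^sub>R 1"
  have bM: "b \<le> M" using m(2) ofnat_mult[of m "1::'a"] by (simp add: M_def)
  have M0: "0 \<le> M" unfolding M_def using one_nonneg by (intro scaleR_nonneg_nonneg) auto
  have kJ: "pprt (real k *\<^sub>R c - M) \<in> JJ I" if k: "k \<ge> 1" for k :: nat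
  proof -
    have "pprt (of_nat k * a - b) \<in> JJ I" using H k quot_le_iff[OF RJ] by blast
    hence z: "pprt (real k *\<^sub>R a - b) \<in> JJ I" by (simp add: ofnat_mult)
    have "real k *\<^sub>R c - M = sup (real k *\<^sub>R a - M) (0 - M)"
      unfolding c_def pprt_scale[OF of_nat_0_le_iff, symmetric] by (simp add: pprt_def sup_diff)
    also have "\<dots> \<le> pprt (real k *\<^sub>R a - b)"
    proof (rule sup_least)
      have "real k *\<^sub>R a - M \<le> real k *\<^sub>R a - b" using bM by (simp add: diff_left_mono)
      thus "real k *\<^sub>R a - M \<le> pprt (real k *\<^sub>R a - b)" by (simp add: pprt_def le_supI1)
      show "0 - M \<le> pprt (real k *\<^sub>R a - b)" using M0
        by (metis diff_0 neg_le_0_iff_le order_trans zero_le_pprt)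
    qed
    finally have "pprt (real k *\<^sub>R c - M) \<le> pprt (real k *\<^sub>R a - b)"
      by (rule pprt_le_nonneg) simp
    thus ?thesis using JJ_solid[OF I z] by simp
  qed
  have "c \<in> JJ I"
    unfolding JJ_def
  proof (intro CollectI allI impI)
    fix n :: nat assume n: "n \<ge> 1"
    define k where "k = (m + 1) * n"
    have k1: "k \<ge> 1" using n by (simp add: k_def)
    have "pprt (real 1 *\<^sub>R \<bar>pprt (real k *\<^sub>R c - M)\<bar> - 1) \<in> I"
      using kJ[OF k1] unfolding JJ_def by blast
    hence inI: "pprt (pprt (real k *\<^sub>R c - M) - 1) \<in> I" by simp
    have "pprt (real n *\<^sub>R \<bar>c\<bar> - 1) = pprt (real n *\<^sub>R c - 1)" using c0 by simp
    also have "\<dots> \<le> real (m+1) *\<^sub>R pprt (real n *\<^sub>R c - 1)"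
    proof -
      have "(1::real) *\<^sub>R pprt (real n *\<^sub>R c - 1) \<le> real (m+1) *\<^sub>R pprt (real n *\<^sub>R c - 1)"
        by (intro scaleR_right_mono) auto
      thus ?thesis by simp
    qed
    also have "\<dots> = pprt (real (m+1) *\<^sub>R (real n *\<^sub>R c - 1))"
      by (simp only: pprt_scale[OF of_nat_0_le_iff])
    also have "real (m+1) *\<^sub>R (real n *\<^sub>R c - 1) = real k *\<^sub>R c - M - 1"
      by (simp add: k_def M_def algebra_simps scaleR_diff_right)
    also have "pprt (real k *\<^sub>R c - M - 1) \<le> pprt (pprt (real k *\<^sub>R c - M) - 1)"
      by (intro pprt_mono diff_right_mono) (simp add: pprt_def)
    finally have "pprt (real n *\<^sub>R \<bar>c\<bar> - 1) \<le> pprt (pprt (real k *\<^sub>R c - M) - 1)" .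
    thus "pprt (real n *\<^sub>R \<bar>c\<bar> - 1) \<in> I" using solid_nonneg[OF I] zero_le_pprt inI by blast
  qed
  thus "quot_le (JJ I) a 0" using quot_le_iff[OF RJ] by (simp add: c_def)
qed

lemma JJ_eq: "{x::'a::bal_algebra. \<forall>n::nat. n \<ge> 1 \<longrightarrow> pos_part (of_nat n * \<bar>x\<bar> - 1) \<in> I} = JJ I"
  by (simp add: JJ_def ofnat_mult pos_part_pprt)

theorem mainTheorem4:
  fixes I :: "'a::bal_algebra set"
  assumes "l_ideal I"
  shows "arch_hull I = {x. \<forall>n::nat. n \<ge> 1 \<longrightarrow> pos_part (of_nat n * \<bar>x\<bar> - 1) \<in> I}"
  unfolding JJ_eq
proof
  show "arch_hull I \<subseteq> JJ I"
    unfolding arch_hull_def using JJ_arch[OF assms] I_sub_JJ[OF assms] by blast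
  show "JJ I \<subseteq> arch_hull I"
    unfolding arch_hull_def
  proof (intro subsetI InterI, clarify)
    fix x K assume x: "x \<in> JJ I" and K: "archimedean_l_ideal K" and IK: "I \<subseteq> K"
    have KL: "l_ideal K" and KA: "\<forall>a b. (\<forall>n::nat. n \<ge> 1 \<longrightarrow> quot_le K (of_nat n * a) b) \<longrightarrow> quot_le K a 0"
      using K unfolding archimedean_l_ideal_def by auto
    have RK: "ring_ideal K" using KL by (rule l_ideal_ring)
    have "quot_le K (of_nat n * \<bar>x\<bar>) 1" if n: "n \<ge> 1" for n :: nat
    proof -
      have "pprt (real n *\<^sub>R \<bar>x\<bar> - 1) \<in> I" using x n unfolding JJ_def by blast
      hence "pprt (of_nat n * \<bar>x\<bar> - 1) \<in> K" using IK by (auto simp: ofnat_mult)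
      thus ?thesis using quot_le_iff[OF RK] by blast
    qed
    hence "quot_le K \<bar>x\<bar> 0" using KA by blast
    hence ax: "\<bar>x\<bar> \<in> K" using quot_le_iff[OF RK] by simp
    have "\<bar>x\<bar> \<le> \<bar>\<bar>x\<bar>\<bar>" by simp
    thus "x \<in> K" using KL ax unfolding l_ideal_def by blast
  qed
qed

end
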